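(* Let $r\geq 3$ and $k\geq 2$, and let $G$ be a $\mathcal{G}^{(r)}_k$-free $r$-graph. Then every maximal connected subgraph of $G$ (i.e. every element of the partition $\mathcal{M}_{1}$ of $E(G)$ into maximal connected subgraphs) is an $m$-tree for some $m\in\{1,\dots,k-1\}$.
   Context: An $r$-graph is an $r$-uniform hypergraph, identified with its edge set. An $(s,k)$-configuration is an $r$-graph with exactly $k$ edges and at most $s$ vertices. $\mathcal{G}^{(r)}_k$ is the family of all $r$-graphs that are either $(rk-2k+2,k)$-configurations or $(r\ell-2\ell+1,\ell)$-configurations for some $\ell\in\{2,\dots,k-1\}$; $\mathcal{G}^{(r)}_k$-free means containing no member of this family as a subgraph. An $r$-graph $F$ is connected if for any two edges $X,Y$ of $F$ there is a sequence of edges $X=X_1,\dots,X_m=Y$ of $F$ with $|X_i\cap X_{i+1}|\ge2$ for all $i$. A $1$-tree is an $r$-graph with a single edge; for $i\geq2$ an $i$-tree is an $r$-graph obtained from an $(i-1)$-tree $T$ by adding a new edge consisting of a pair of vertices contained together in some edge of $T$ and $r-2$ new vertices not in $T$. *)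

theory Defs
  imports Main
begin

text \<open>An r-graph is identified with its edge set: a set of r-element vertex sets.\<close>
definition r_graph :: "nat \<Rightarrow> 'a set set \<Rightarrow> bool" where
  "r_graph r G \<longleftrightarrow> (\<forall>e\<in>G. finite e \<and> card e = r)"

definition vertices :: "'a set set \<Rightarrow> 'a set" where
  "vertices F = \<Union>F"

definition configuration :: "nat \<Rightarrow> nat \<Rightarrow> nat \<Rightarrow> 'a set set \<Rightarrow> bool" where
  "configuration r s k F \<longleftrightarrow>
     r_graph r F \<and> finite F \<and> card F = k \<and> finite (vertices F) \<and> card (vertices F) \<le> s"

definition in_family_G :: "nat \<Rightarrow> nat \<Rightarrow> 'a set set \<Rightarrow> bool" where
  "in_family_G r k F \<longleftrightarrow>
     configuration r (r*k - 2*k + 2) k F \<or>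
     (\<exists>l\<in>{2..k-1}. configuration r (r*l - 2*l + 1) l F)"

definition G_free :: "nat \<Rightarrow> nat \<Rightarrow> 'a set set \<Rightarrow> bool" where
  "G_free r k G \<longleftrightarrow> \<not> (\<exists>F. F \<subseteq> G \<and> in_family_G r k F)"

definition connected_hg :: "'a set set \<Rightarrow> bool" where
  "connected_hg F \<longleftrightarrow>
     (\<forall>X\<in>F. \<forall>Y\<in>F. \<exists>xs. xs \<noteq> [] \<and> hd xs = X \<and> last xs = Y \<and> set xs \<subseteq> F \<and>
        (\<forall>i. Suc i < length xs \<longrightarrow> card (xs ! i \<inter> xs ! Suc i) \<ge> 2))"

definition maximal_connected_subgraph :: "'a set set \<Rightarrow> 'a set set \<Rightarrow> bool" where
  "maximal_connected_subgraph G F \<longleftrightarrow>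
     F \<subseteq> G \<and> F \<noteq> {} \<and> connected_hg F \<and>
     (\<forall>F'. F \<subseteq> F' \<and> F' \<subseteq> G \<and> connected_hg F' \<longrightarrow> F' = F)"

inductive is_tree :: "nat \<Rightarrow> nat \<Rightarrow> 'a set set \<Rightarrow> bool" for r :: nat where
  one: "finite e \<Longrightarrow> card e = r \<Longrightarrow> is_tree r 1 {e}"
| step: "is_tree r i T \<Longrightarrow> e \<in> T \<Longrightarrow> P \<subseteq> e \<Longrightarrow> card P = 2 \<Longrightarrow>
         finite N \<Longrightarrow> card N = r - 2 \<Longrightarrow> N \<inter> vertices T = {} \<Longrightarrow>
         is_tree r (Suc i) (insert (P \<union> N) T)"

end

theory Submission
  imports Defs
begin

lemma exit_index:
  assumes "xs \<noteq> []" "hd xs \<in> T" "last xs \<notin> T"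
  shows "\<exists>i. Suc i < length xs \<and> xs ! i \<in> T \<and> xs ! Suc i \<notin> T"
  using assms
proof (induction xs)
  case Nil then show ?case by simp
next
  case (Cons x xs)
  show ?case
  proof (cases "xs = []")
    case True then show ?thesis using Cons by simp
  next
    case False
    show ?thesis
    proof (cases "hd xs \<in> T")
      case True
      with Cons.IH False Cons.prems obtain i where "Suc i < length xs" "xs ! i \<in> T" "xs ! Suc i \<notin> T"
        by auto
      then show ?thesis by (intro exI[of _ "Suc i"]) auto
    next
      case f2: False
      then show ?thesis using Cons.prems False
        by (intro exI[of _ 0]) (auto simp: hd_conv_nth)
    qed
  qed
qed

lemma grow:
  assumes "connected_hg F" "T \<subseteq> F" "T \<noteq> {}" "T \<noteq> F"
  shows "\<exists>e\<in>F - T. \<exists>X\<in>T. card (e \<inter> X) \<ge> 2"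
proof -
  obtain X0 where X0: "X0 \<in> T" using assms by auto
  obtain Y where Y: "Y \<in> F" "Y \<notin> T" using assms by auto
  have X0F: "X0 \<in> F" using X0 assms(2) by auto
  have cc: "\<forall>X\<in>F. \<forall>Y\<in>F. \<exists>xs. xs \<noteq> [] \<and> hd xs = X \<and> last xs = Y \<and> set xs \<subseteq> F \<and>
        (\<forall>i. Suc i < length xs \<longrightarrow> card (xs ! i \<inter> xs ! Suc i) \<ge> 2)"
    using assms(1) unfolding connected_hg_def .
  obtain xs where xs: "xs \<noteq> []" "hd xs = X0" "last xs = Y" "set xs \<subseteq> F"
    "\<forall>i. Suc i < length xs \<longrightarrow> card (xs ! i \<inter> xs ! Suc i) \<ge> 2"
    using cc[rule_format, OF X0F Y(1)] by (elim exE conjE) simp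
  from exit_index[of xs T] xs X0 Y obtain i where i: "Suc i < length xs" "xs ! i \<in> T" "xs ! Suc i \<notin> T"
    by auto
  have "xs ! Suc i \<in> F" using i xs(4) nth_mem[of "Suc i" xs] by auto
  moreover have "card (xs ! Suc i \<inter> xs ! i) \<ge> 2" using xs(5) i by (simp add: Int_commute)
  ultimately show ?thesis using i by blast
qed

lemma vert_finite:
  assumes "r_graph r T" "finite T"
  shows "finite (vertices T)"
  using assms unfolding r_graph_def vertices_def by auto

theorem lemma5p4:
  fixes G :: "'a set set" and r k :: nat
  assumes "r \<ge> 3" and "k \<ge> 2"
    and "finite G" and "r_graph r G"
    and "G_free r k G"
    and "maximal_connected_subgraph G F"
  shows "\<exists>m\<in>{1..k-1}. is_tree r m F"
proof -
  have FG: "F \<subseteq> G" and Fne: "F \<noteq> {}" and Fc: "connected_hg F"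
    using assms(6) unfolding maximal_connected_subgraph_def by auto
  have finF: "finite F" using FG assms(3) finite_subset by auto
  have rgsub: "r_graph r H" if "H \<subseteq> G" for H
    using that assms(4) unfolding r_graph_def by auto
  have notfam: "\<not> in_family_G r k H" if "H \<subseteq> G" for H
    using that assms(5) unfolding G_free_def by auto
  have ext: "\<exists>e\<in>F - T. \<exists>X\<in>T. card (e \<inter> X) \<ge> 2 \<and>
        card (vertices (insert e T)) = card (vertices T) + r - card (e \<inter> vertices T)
        \<and> card (e \<inter> vertices T) \<ge> 2 \<and> card (e \<inter> vertices T) \<le> r
        \<and> finite (vertices (insert e T)) \<and> card (insert e T) = Suc (card T)"
    if "T \<subseteq> F" "T \<noteq> {}" "T \<noteq> F" for T
  proof -
    from grow[OF Fc that] obtain e X where eX: "e \<in> F - T" "X \<in> T" "card (e \<inter> X) \<ge> 2" by blast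
    have TG: "T \<subseteq> G" using that FG by auto
    have finT: "finite T" using that finF finite_subset by auto
    have fv: "finite (vertices T)" using vert_finite[OF rgsub[OF TG] finT] .
    have fe: "finite e" and ce: "card e = r" using eX FG assms(4) unfolding r_graph_def by auto
    have Xsub: "e \<inter> X \<subseteq> e \<inter> vertices T" using eX unfolding vertices_def by auto
    have c2: "card (e \<inter> vertices T) \<ge> 2"
      using card_mono[OF _ Xsub] fe eX(3) by auto
    have cr: "card (e \<inter> vertices T) \<le> r" using card_mono[OF fe, of "e \<inter> vertices T"] ce by auto
    have vi: "vertices (insert e T) = vertices T \<union> (e - vertices T)"
      unfolding vertices_def by auto
    have "card (vertices (insert e T)) = card (vertices T) + card (e - vertices T)"
      unfolding vi by (rule card_Un_disjoint) (use fv fe in auto)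
    moreover have "card (e - vertices T) = r - card (e \<inter> vertices T)"
      using card_Diff_subset_Int[of e "vertices T"] fe ce by auto
    ultimately have cv: "card (vertices (insert e T)) = card (vertices T) + r - card (e \<inter> vertices T)"
      using cr by auto
    have "finite (vertices (insert e T))" using vi fv fe by auto
    moreover have "card (insert e T) = Suc (card T)" using eX finT by auto
    ultimately show ?thesis using eX cv c2 cr by blast
  qed
  have ar: "r * l - 2 * l = (r - 2) * l" for l by (simp add: diff_mult_distrib)
  have claim: "\<exists>T\<subseteq>F. card T = n \<and> is_tree r n T \<and> card (vertices T) = (r - 2) * n + 2"
    if "1 \<le> n" "n \<le> card F" "n \<le> k - 1" for n
    using that
  proof (induction n rule: nat_induct_at_least)
    case base
    obtain e where e: "e \<in> F" using Fne by auto
    have fe: "finite e" and ce: "card e = r" using e FG assms(4) unfolding r_graph_def by auto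
    have "is_tree r 1 {e}" by (rule is_tree.one[OF fe ce])
    moreover have "card (vertices {e}) = (r - 2) * 1 + 2" using ce assms(1) unfolding vertices_def by simp
    ultimately show ?case using e by auto
  next
    case (Suc n)
    then obtain T where T: "T \<subseteq> F" "card T = n" "is_tree r n T" "card (vertices T) = (r - 2) * n + 2"
      by auto
    have Tne: "T \<noteq> {}" using T(2) Suc.hyps by auto
    have TF: "T \<noteq> F" using T(2) Suc.prems by auto
    from ext[OF T(1) Tne TF] obtain e X where eX: "e \<in> F - T" "X \<in> T" "card (e \<inter> X) \<ge> 2"
      and cv: "card (vertices (insert e T)) = card (vertices T) + r - card (e \<inter> vertices T)"
      and c2: "card (e \<inter> vertices T) \<ge> 2" and cr: "card (e \<inter> vertices T) \<le> r"
      and fv': "finite (vertices (insert e T))" and ci: "card (insert e T) = Suc (card T)"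
      by blast
    have TG': "insert e T \<subseteq> G" using eX T(1) FG by auto
    have finT': "finite (insert e T)" using TG' assms(3) finite_subset by auto
    have fe: "finite e" and ce: "card e = r" using eX FG assms(4) unfolding r_graph_def by auto
    have c_eq: "card (e \<inter> vertices T) = 2"
    proof (rule ccontr)
      assume "card (e \<inter> vertices T) \<noteq> 2"
      then have "card (e \<inter> vertices T) \<ge> 3" using c2 by auto
      then have "card (vertices (insert e T)) \<le> (r - 2) * Suc n + 1"
        using cv T(4) cr assms(1) by auto
      then have "configuration r (r * Suc n - 2 * Suc n + 1) (Suc n) (insert e T)"
        unfolding configuration_def ar using rgsub[OF TG'] finT' ci T(2) fv' by auto
      moreover have "Suc n \<in> {2..k-1}" using Suc by auto
      ultimately have "in_family_G r k (insert e T)" unfolding in_family_G_def by blast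
      then show False using notfam[OF TG'] by blast
    qed
    have XvT: "e \<inter> X \<subseteq> e \<inter> vertices T" using eX unfolding vertices_def by auto
    have PX: "e \<inter> X = e \<inter> vertices T"
      by (rule card_subset_eq) (use XvT fe c_eq eX(3) card_mono[OF _ XvT] in auto)
    define N where "N = e - vertices T"
    have eq: "insert e T = insert ((e \<inter> X) \<union> N) T" unfolding N_def using PX by auto
    have cN: "card N = r - 2" unfolding N_def
      using card_Diff_subset_Int[of e "vertices T"] fe ce c_eq by auto
    have "is_tree r (Suc n) (insert ((e \<inter> X) \<union> N) T)"
      by (rule is_tree.step[OF T(3) eX(2)]) (use c_eq PX fe cN in \<open>auto simp: N_def\<close>)
    moreover have "card (vertices (insert e T)) = (r - 2) * Suc n + 2"
      using cv T(4) c_eq assms(1) by auto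
    ultimately have "is_tree r (Suc n) (insert e T)" "card (vertices (insert e T)) = (r - 2) * Suc n + 2"
      using eq by simp_all
    moreover have "insert e T \<subseteq> F" using eX T(1) by blast
    moreover have "card (insert e T) = Suc n" using ci T(2) by simp
    ultimately show ?case by blast
  qed
  have le: "card F \<le> k - 1"
  proof (rule ccontr)
    assume "\<not> card F \<le> k - 1"
    then obtain T where T: "T \<subseteq> F" "card T = k - 1" "is_tree r (k-1) T"
       "card (vertices T) = (r - 2) * (k - 1) + 2"
    proof -
      have "1 \<le> k - 1" "k - 1 \<le> card F" "k - 1 \<le> k - 1"
        using assms(2) \<open>\<not> card F \<le> k - 1\<close> by auto
      from claim[OF this] show ?thesis using that by blast
    qed
    have Tne: "T \<noteq> {}" using T(2) assms(2) by auto
    have TF: "T \<noteq> F" using T(2) \<open>\<not> card F \<le> k - 1\<close> by auto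
    from ext[OF T(1) Tne TF] obtain e where eX: "e \<in> F - T"
      and cv: "card (vertices (insert e T)) = card (vertices T) + r - card (e \<inter> vertices T)"
      and c2: "card (e \<inter> vertices T) \<ge> 2" and cr: "card (e \<inter> vertices T) \<le> r"
      and fv': "finite (vertices (insert e T))" and ci: "card (insert e T) = Suc (card T)"
      by blast
    have TG': "insert e T \<subseteq> G" using eX T(1) FG by auto
    have finT': "finite (insert e T)" using TG' assms(3) finite_subset by auto
    have kk: "(r - 2) * (k - 1) + 2 + r - 2 = (r - 2) * k + 2"
    proof -
      obtain s where s: "r = s + 2" using assms(1) by (intro that[of "r - 2"]) simp
      obtain j where j: "k = Suc j" using assms(2) by (cases k) auto
      show ?thesis unfolding s j by (simp add: algebra_simps)
    qed
    have "card (vertices (insert e T)) \<le> (r - 2) * k + 2"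
      using cv T(4) c2 cr kk by linarith
    then have "configuration r (r * k - 2 * k + 2) k (insert e T)"
      unfolding configuration_def ar using rgsub[OF TG'] finT' ci T(2) fv' assms(2) by auto
    then have "in_family_G r k (insert e T)" unfolding in_family_G_def by blast
    then show False using notfam[OF TG'] by blast
  qed
  have "1 \<le> card F" using Fne finF by (simp add: Suc_le_eq card_gt_0_iff)
  then obtain T where T: "T \<subseteq> F" "card T = card F" "is_tree r (card F) T"
    using claim[of "card F"] le by auto
  have "T = F" using card_subset_eq[OF finF T(1) T(2)] .
  then show ?thesis using T(3) le \<open>1 \<le> card F\<close> by auto
qed

end
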